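(* Let $U$ be a $p$-qubit unitary, $\mathcal{C}$ a quantum code, and $\mathcal{F}$ a family of circuits closed under composition. Then $U$ is $\mathcal{F}$-addressable on $\mathcal{C}$ if and only if $U$ is $\mathcal{F}$-parallel addressable on $\mathcal{C}$.
   Context: Fix logical Pauli operators for the $k$ logical qubits of $\mathcal{C}$, so that each logical operator (unitary preserving the codespace) has a well-defined logical action. $U$ is $\mathcal{F}$-addressable on $\mathcal{C}$ if for every ordered $p$-tuple $t$ of logical qubits there is a circuit in $\mathcal{F}$ that is a logical operator with logical action $\bar U$ on $t$ (and identity on the other logical qubits). $U$ is $\mathcal{F}$-parallel addressable on $\mathcal{C}$ if for every set $I$ of pairwise disjoint ordered $p$-tuples of logical qubits there is a circuit in $\mathcal{F}$ that is a logical operator with logical action $\bar U$ applied to every tuple in $I$ (and identity on the other logical qubits). *)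

theory Defs
  imports Complex_Main "Jordan_Normal_Form.Matrix"
begin

definition dagger :: "complex mat \<Rightarrow> complex mat" where
  "dagger A = mat (dim_col A) (dim_row A) (\<lambda>(i,j). cnj (A $$ (j,i)))"

definition unitary_mat :: "nat \<Rightarrow> complex mat \<Rightarrow> bool" where
  "unitary_mat d V \<longleftrightarrow> V \<in> carrier_mat d d \<and> dagger V * V = 1\<^sub>m d \<and> V * dagger V = 1\<^sub>m d"

text \<open>A quantum code with n physical and k logical qubits, with fixed logical
  basis (equivalently, fixed logical Pauli operators), is given by its encoding
  isometry E : (C^2)^k -> (C^2)^n; the codespace is the range of E.\<close>
definition code :: "nat \<Rightarrow> nat \<Rightarrow> complex mat \<Rightarrow> bool" where
  "code n k E \<longleftrightarrow> E \<in> carrier_mat (2^n) (2^k) \<and> dagger E * E = 1\<^sub>m (2^k)"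

definition logical_op :: "nat \<Rightarrow> nat \<Rightarrow> complex mat \<Rightarrow> complex mat \<Rightarrow> bool" where
  "logical_op n k E V \<longleftrightarrow> unitary_mat (2^n) V \<and>
     (\<forall>v \<in> carrier_vec (2^k). \<exists>w \<in> carrier_vec (2^k). V *\<^sub>v (E *\<^sub>v v) = E *\<^sub>v w)"

text \<open>Logical action of a logical operator V (the unique L with V E = E L).\<close>
definition logical_action :: "complex mat \<Rightarrow> complex mat \<Rightarrow> complex mat" where
  "logical_action E V = dagger E * V * E"

definition qbit :: "nat \<Rightarrow> nat \<Rightarrow> nat" where
  "qbit i j = (i div 2^j) mod 2"

text \<open>Index of the restriction of basis state i to the ordered tuple t
  (the m-th entry of t is the m-th qubit of the p-qubit register).\<close>
definition restr :: "nat list \<Rightarrow> nat \<Rightarrow> nat" where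
  "restr t i = (\<Sum>m<length t. qbit i (t ! m) * 2^m)"

definition tuple :: "nat \<Rightarrow> nat \<Rightarrow> nat list \<Rightarrow> bool" where
  "tuple k p t \<longleftrightarrow> length t = p \<and> distinct t \<and> set t \<subseteq> {..<k}"

definition pairwise_disjoint_tuples :: "nat list set \<Rightarrow> bool" where
  "pairwise_disjoint_tuples I \<longleftrightarrow>
     (\<forall>t\<in>I. \<forall>t'\<in>I. t \<noteq> t' \<longrightarrow> set t \<inter> set t' = {})"

text \<open>The k-qubit operator applying the p-qubit unitary U to every tuple in the
  set I of pairwise disjoint tuples, and identity on all other qubits.\<close>
definition apply_on :: "nat \<Rightarrow> nat list set \<Rightarrow> complex mat \<Rightarrow> complex mat" where
  "apply_on k I U = mat (2^k) (2^k) (\<lambda>(i,i').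
     if (\<forall>j<k. j \<notin> (\<Union>t\<in>I. set t) \<longrightarrow> qbit i j = qbit i' j)
     then (\<Prod>t\<in>I. U $$ (restr t i, restr t i')) else 0)"

text \<open>Family of circuits (identified with the unitaries they implement) closed
  under composition.\<close>
definition closed_comp :: "complex mat set \<Rightarrow> bool" where
  "closed_comp F \<longleftrightarrow> (\<forall>A\<in>F. \<forall>B\<in>F. B * A \<in> F)"

definition addressable :: "nat \<Rightarrow> nat \<Rightarrow> complex mat \<Rightarrow> complex mat set \<Rightarrow> nat \<Rightarrow> complex mat \<Rightarrow> bool" where
  "addressable n k E F p U \<longleftrightarrow>
     (\<forall>t. tuple k p t \<longrightarrow>
        (\<exists>V\<in>F. logical_op n k E V \<and> logical_action E V = apply_on k {t} U))"

definition parallel_addressable :: "nat \<Rightarrow> nat \<Rightarrow> complex mat \<Rightarrow> complex mat set \<Rightarrow> nat \<Rightarrow> complex mat \<Rightarrow> bool" where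
  "parallel_addressable n k E F p U \<longleftrightarrow>
     (\<forall>I. I \<noteq> {} \<and> (\<forall>t\<in>I. tuple k p t) \<and> pairwise_disjoint_tuples I \<longrightarrow>
        (\<exists>V\<in>F. logical_op n k E V \<and> logical_action E V = apply_on k I U))"

end

theory Submission
  imports Defs
begin

lemma qbit_bit: "qbit i j = of_bool (bit i j)"
  unfolding qbit_def by (simp add: bit_iff_odd odd_iff_mod_2_eq_one)

lemma qbit_eq_nat:
  assumes "i < 2^k" "l < 2^k" "\<forall>j<k. qbit i j = qbit l j"
  shows "i = (l::nat)"
proof (rule bit_eqI)
  fix j
  show "bit i j = bit l j"
  proof (cases "j < k")
    case True
    have "qbit i j = qbit l j" using assms(3) True by simp
    then show ?thesis by (cases "bit i j"; cases "bit l j") (simp_all add: qbit_bit)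
  next
    case False
    have "take_bit k i = i" "take_bit k l = l" using assms(1,2) by (simp_all add: take_bit_nat_eq_self)
    then show ?thesis using False by (metis bit_take_bit_iff)
  qed
qed

lemma qbit_construct:
  "\<exists>l<(2::nat)^k. \<forall>j<k. qbit l j = (if P j then qbit a j else qbit b j)"
proof -
  define l :: nat where "l = horner_sum of_bool 2 (map (\<lambda>j. if P j then bit a j else bit b j) [0..<k])"
  have "l < 2^k" unfolding l_def using horner_sum_of_bool_2_less[of "map (\<lambda>j. if P j then bit a j else bit b j) [0..<k]"] by simp
  moreover have "\<forall>j<k. qbit l j = (if P j then qbit a j else qbit b j)"
    unfolding l_def qbit_bit by (simp add: bit_horner_sum_bit_iff)
  ultimately show ?thesis by blast
qed

lemma restr_cong: "(\<forall>j\<in>set s. qbit l j = qbit i j) \<Longrightarrow> restr s l = restr s i"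
  unfolding restr_def by (intro sum.cong) auto

lemma apply_on_insert:
  assumes fin: "finite I" and tI: "t \<notin> I" and disj: "\<forall>s\<in>I. set s \<inter> set t = {}"
    and kt: "set t \<subseteq> {..<k}" and kI: "\<forall>s\<in>I. set s \<subseteq> {..<k}"
  shows "apply_on k {t} U * apply_on k I U = apply_on k (insert t I) U"
proof (rule eq_matI)
  show "dim_row (apply_on k {t} U * apply_on k I U) = dim_row (apply_on k (insert t I) U)"
       "dim_col (apply_on k {t} U * apply_on k I U) = dim_col (apply_on k (insert t I) U)"
    by (simp_all add: apply_on_def)
  fix i i' assume "i < dim_row (apply_on k (insert t I) U)" "i' < dim_col (apply_on k (insert t I) U)"
  hence i: "i < 2^k" and i': "i' < 2^k" by (simp_all add: apply_on_def)
  define S where "S = (\<Union>s\<in>I. set s)"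
  define A where "A = (\<lambda>l. if (\<forall>j<k. j \<notin> set t \<longrightarrow> qbit i j = qbit l j) then U $$ (restr t i, restr t l) else 0)"
  define B where "B = (\<lambda>l. if (\<forall>j<k. j \<notin> S \<longrightarrow> qbit l j = qbit i' j) then (\<Prod>s\<in>I. U $$ (restr s l, restr s i')) else 0)"
  have lhs: "(apply_on k {t} U * apply_on k I U) $$ (i,i') = (\<Sum>l\<in>{0..<2^k}. A l * B l)"
    using i i' by (simp add: apply_on_def scalar_prod_def A_def B_def S_def cong: if_cong)
  have rhs: "apply_on k (insert t I) U $$ (i,i') = (if (\<forall>j<k. j \<notin> set t \<union> S \<longrightarrow> qbit i j = qbit i' j)
     then U $$ (restr t i, restr t i') * (\<Prod>s\<in>I. U $$ (restr s i, restr s i')) else 0)"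
    using i i' fin tI by (auto simp add: apply_on_def S_def)
  have disjS: "\<And>j. j \<in> set t \<Longrightarrow> j \<notin> S" using disj unfolding S_def by blast
  show "(apply_on k {t} U * apply_on k I U) $$ (i,i') = apply_on k (insert t I) U $$ (i,i')"
  proof (cases "\<forall>j<k. j \<notin> set t \<union> S \<longrightarrow> qbit i j = qbit i' j")
    case C: True
    obtain l0 where l0: "l0 < 2^k" and l0b: "\<forall>j<k. qbit l0 j = (if j \<in> set t then qbit i' j else qbit i j)"
      using qbit_construct[of k "\<lambda>j. j \<in> set t" i' i] by blast
    have others: "A l * B l = 0" if l: "l \<in> {0..<2^k} - {l0}" for l
    proof (rule ccontr)
      assume "A l * B l \<noteq> 0"
      hence a: "\<forall>j<k. j \<notin> set t \<longrightarrow> qbit i j = qbit l j" and b: "\<forall>j<k. j \<notin> S \<longrightarrow> qbit l j = qbit i' j"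
        unfolding A_def B_def by (auto split: if_splits)
      have "\<forall>j<k. qbit l j = qbit l0 j" using a b l0b disjS by auto
      hence "l = l0" using l l0 qbit_eq_nat[of l k l0] by auto
      thus False using l by simp
    qed
    have "(\<Sum>l\<in>{0..<2^k}. A l * B l) = A l0 * B l0 + (\<Sum>l\<in>{0..<2^k} - {l0}. A l * B l)"
      using l0 by (subst sum.remove[of _ l0]) auto
    also have "(\<Sum>l\<in>{0..<2^k} - {l0}. A l * B l) = 0" using others by (intro sum.neutral) blast
    also have "A l0 = U $$ (restr t i, restr t i')"
    proof -
      have "restr t l0 = restr t i'" using l0b kt by (intro restr_cong) auto
      moreover have "\<forall>j<k. j \<notin> set t \<longrightarrow> qbit i j = qbit l0 j" using l0b by auto
      ultimately show ?thesis unfolding A_def by simp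
    qed
    also have "B l0 = (\<Prod>s\<in>I. U $$ (restr s i, restr s i'))"
    proof -
      have "restr s l0 = restr s i" if "s \<in> I" for s
      proof (rule restr_cong, intro ballI)
        fix j assume j: "j \<in> set s"
        hence "j < k" "j \<notin> set t" using that kI disj by auto
        thus "qbit l0 j = qbit i j" using l0b by auto
      qed
      moreover have "\<forall>j<k. j \<notin> S \<longrightarrow> qbit l0 j = qbit i' j" using l0b C by auto
      ultimately show ?thesis unfolding B_def by simp
    qed
    finally show ?thesis using lhs rhs C by simp
  next
    case NC: False
    have "A l * B l = 0" for l
    proof (rule ccontr)
      assume "A l * B l \<noteq> 0"
      hence a: "\<forall>j<k. j \<notin> set t \<longrightarrow> qbit i j = qbit l j" and b: "\<forall>j<k. j \<notin> S \<longrightarrow> qbit l j = qbit i' j"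
        unfolding A_def B_def by (auto split: if_splits)
      thus False using NC by auto
    qed
    hence "(\<Sum>l\<in>{0..<2^k}. A l * B l) = 0" by (intro sum.neutral) blast
    thus ?thesis unfolding lhs rhs if_not_P[OF NC] .
  qed
qed


lemma dagger_carrier: "A \<in> carrier_mat r c \<Longrightarrow> dagger A \<in> carrier_mat c r"
  unfolding dagger_def by auto

lemma dagger_mult:
  assumes A: "A \<in> carrier_mat a b" and B: "B \<in> carrier_mat b c"
  shows "dagger (A * B) = dagger B * dagger A"
proof (rule eq_matI)
  fix i j assume "i < dim_row (dagger B * dagger A)" "j < dim_col (dagger B * dagger A)"
  hence i: "i < c" and j: "j < a" using A B dagger_carrier[OF A] dagger_carrier[OF B] by auto
  show "dagger (A * B) $$ (i, j) = (dagger B * dagger A) $$ (i, j)"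
    using A B i j by (auto simp: dagger_def scalar_prod_def mult.commute intro!: sum.cong)
qed (use A B in \<open>auto simp: dagger_def\<close>)

lemma mult_unit_col: "(X :: 'a :: semiring_1 mat) \<in> carrier_mat r c \<Longrightarrow> j < c \<Longrightarrow> X *\<^sub>v unit_vec c j = col X j"
  by (intro eq_vecI) auto

lemma logical_proj:
  assumes C: "code n k E" and L: "logical_op n k E A"
  shows "A * E = E * (dagger E * A * E)"
proof -
  have E: "E \<in> carrier_mat (2^n) (2^k)" and EE: "dagger E * E = 1\<^sub>m (2^k)" using C by (auto simp: code_def)
  have A: "A \<in> carrier_mat (2^n) (2^n)" using L by (auto simp: logical_op_def unitary_mat_def)
  have dE: "dagger E \<in> carrier_mat (2^k) (2^n)" using dagger_carrier[OF E] .
  have M: "dagger E * A * E \<in> carrier_mat (2^k) (2^k)" using dE A E by auto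
  show ?thesis
  proof (rule mat_col_eqI)
    fix j assume "j < dim_col (E * (dagger E * A * E))"
    hence j: "j < 2^k" using E M by auto
    define e :: "complex vec" where "e = unit_vec (2^k) j"
    have e: "e \<in> carrier_vec (2^k)" unfolding e_def by simp
    obtain w where w: "w \<in> carrier_vec (2^k)" "A *\<^sub>v (E *\<^sub>v e) = E *\<^sub>v w"
      using L e unfolding logical_op_def by blast
    have "col (A * E) j = (A * E) *\<^sub>v e" unfolding e_def using A E j by (simp add: mult_unit_col)
    also have "\<dots> = E *\<^sub>v w" using A E e w by simp
    finally have 1: "col (A * E) j = E *\<^sub>v w" .
    have "col (E * (dagger E * A * E)) j = (E * (dagger E * A * E)) *\<^sub>v e"
      unfolding e_def using E M j by (simp add: mult_unit_col)
    also have "\<dots> = E *\<^sub>v (dagger E *\<^sub>v (A *\<^sub>v (E *\<^sub>v e)))"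
    proof -
      have AE: "A * E \<in> carrier_mat (2^n) (2^k)" using A E by simp
      have M': "dagger E * (A * E) \<in> carrier_mat (2^k) (2^k)" using dE AE by simp
      have "dagger E * A * E = dagger E * (A * E)" using dE A E by simp
      hence "(E * (dagger E * A * E)) *\<^sub>v e = E *\<^sub>v ((dagger E * (A * E)) *\<^sub>v e)"
        using assoc_mult_mat_vec[OF E M' e] by simp
      also have "(dagger E * (A * E)) *\<^sub>v e = dagger E *\<^sub>v ((A * E) *\<^sub>v e)"
        using assoc_mult_mat_vec[OF dE AE e] .
      also have "(A * E) *\<^sub>v e = A *\<^sub>v (E *\<^sub>v e)" using assoc_mult_mat_vec[OF A E e] .
      finally show ?thesis .
    qed
    also have "\<dots> = E *\<^sub>v (dagger E *\<^sub>v (E *\<^sub>v w))" using w by simp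
    also have "dagger E *\<^sub>v (E *\<^sub>v w) = (dagger E * E) *\<^sub>v w" using dE E w by simp
    also have "\<dots> = w" using EE w by simp
    finally show "col (A * E) j = col (E * (dagger E * A * E)) j" using 1 by simp
  qed (use A E M in auto)
qed

lemma logical_mult:
  assumes C: "code n k E" and LA: "logical_op n k E A" and LB: "logical_op n k E B"
  shows "logical_op n k E (B * A) \<and> logical_action E (B * A) = logical_action E B * logical_action E A"
proof -
  have E: "E \<in> carrier_mat (2^n) (2^k)" using C by (auto simp: code_def)
  have A: "A \<in> carrier_mat (2^n) (2^n)" and A1: "dagger A * A = 1\<^sub>m (2^n)" and A2: "A * dagger A = 1\<^sub>m (2^n)"
    using LA by (auto simp: logical_op_def unitary_mat_def)
  have B: "B \<in> carrier_mat (2^n) (2^n)" and B1: "dagger B * B = 1\<^sub>m (2^n)" and B2: "B * dagger B = 1\<^sub>m (2^n)"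
    using LB by (auto simp: logical_op_def unitary_mat_def)
  have dA: "dagger A \<in> carrier_mat (2^n) (2^n)" using dagger_carrier[OF A] .
  have dB: "dagger B \<in> carrier_mat (2^n) (2^n)" using dagger_carrier[OF B] .
  have dE: "dagger E \<in> carrier_mat (2^k) (2^n)" using dagger_carrier[OF E] .
  have dBA: "dagger (B * A) = dagger A * dagger B" using dagger_mult[OF B A] .
  have u1: "dagger (B * A) * (B * A) = 1\<^sub>m (2^n)"
  proof -
    have BA: "B * A \<in> carrier_mat (2^n) (2^n)" using A B by simp
    have "dagger A * dagger B * (B * A) = dagger A * (dagger B * (B * A))" using assoc_mult_mat[OF dA dB BA] .
    also have "dagger B * (B * A) = (dagger B * B) * A" using assoc_mult_mat[OF dB B A] by simp
    also have "dagger A * ((dagger B * B) * A) = 1\<^sub>m (2^n)" using B1 A1 A by simp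
    finally show ?thesis using dBA by simp
  qed
  have u2: "(B * A) * dagger (B * A) = 1\<^sub>m (2^n)"
  proof -
    have dAB: "dagger A * dagger B \<in> carrier_mat (2^n) (2^n)" using dA dB by simp
    have "B * A * (dagger A * dagger B) = B * (A * (dagger A * dagger B))" using assoc_mult_mat[OF B A dAB] .
    also have "A * (dagger A * dagger B) = (A * dagger A) * dagger B" using assoc_mult_mat[OF A dA dB] by simp
    also have "B * ((A * dagger A) * dagger B) = 1\<^sub>m (2^n)" using A2 B2 dB by simp
    finally show ?thesis using dBA by simp
  qed
  have pres: "\<forall>v\<in>carrier_vec (2^k). \<exists>w\<in>carrier_vec (2^k). (B * A) *\<^sub>v (E *\<^sub>v v) = E *\<^sub>v w"
  proof
    fix v :: "complex vec" assume v: "v \<in> carrier_vec (2^k)"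
    obtain w where w: "w \<in> carrier_vec (2^k)" "A *\<^sub>v (E *\<^sub>v v) = E *\<^sub>v w"
      using LA v unfolding logical_op_def by blast
    obtain w' where w': "w' \<in> carrier_vec (2^k)" "B *\<^sub>v (E *\<^sub>v w) = E *\<^sub>v w'"
      using LB w(1) unfolding logical_op_def by blast
    have "(B * A) *\<^sub>v (E *\<^sub>v v) = B *\<^sub>v (A *\<^sub>v (E *\<^sub>v v))" using A B E v by simp
    also have "\<dots> = E *\<^sub>v w'" using w w' by simp
    finally show "\<exists>w\<in>carrier_vec (2^k). (B * A) *\<^sub>v (E *\<^sub>v v) = E *\<^sub>v w" using w' by blast
  qed
  have "logical_op n k E (B * A)"
    unfolding logical_op_def unitary_mat_def using A B u1 u2 pres by auto
  moreover have "logical_action E (B * A) = logical_action E B * logical_action E A"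
  proof -
    have M: "dagger E * A * E \<in> carrier_mat (2^k) (2^k)" using dE A E by auto
    have BA: "B * A \<in> carrier_mat (2^n) (2^n)" and AE: "A * E \<in> carrier_mat (2^n) (2^k)"
      and dEB: "dagger E * B \<in> carrier_mat (2^k) (2^n)" using A B E dE by auto
    have "dagger E * (B * A) * E = dagger E * ((B * A) * E)" using assoc_mult_mat[OF dE BA E] .
    also have "(B * A) * E = B * (A * E)" using assoc_mult_mat[OF B A E] .
    also have "dagger E * (B * (A * E)) = dagger E * B * (A * E)" using assoc_mult_mat[OF dE B AE] by simp
    also have "A * E = E * (dagger E * A * E)" using logical_proj[OF C LA] .
    also have "dagger E * B * (E * (dagger E * A * E)) = (dagger E * B * E) * (dagger E * A * E)"
      using assoc_mult_mat[OF dEB E M] by simp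
    finally show ?thesis unfolding logical_action_def .
  qed
  ultimately show ?thesis by blast
qed


theorem lemma1:
  fixes n k p :: nat and E U :: "complex mat" and F :: "complex mat set"
  assumes "unitary_mat (2^p) U"
    and "code n k E"
    and "\<forall>V\<in>F. V \<in> carrier_mat (2^n) (2^n)"
    and "closed_comp F"
  shows "addressable n k E F p U \<longleftrightarrow> parallel_addressable n k E F p U"
proof
  assume ad: "addressable n k E F p U"
  show "parallel_addressable n k E F p U" unfolding parallel_addressable_def
  proof (intro allI impI)
    fix I assume H: "I \<noteq> {} \<and> (\<forall>t\<in>I. tuple k p t) \<and> pairwise_disjoint_tuples I"
    have "I \<subseteq> {xs. set xs \<subseteq> {..<k} \<and> length xs = p}" using H by (auto simp: tuple_def)
    hence fin: "finite I" using finite_lists_length_eq[of "{..<k}" p] finite_subset by blast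
    have gen: "J \<subseteq> I \<Longrightarrow> \<exists>V\<in>F. logical_op n k E V \<and> logical_action E V = apply_on k J U"
      if "finite J" "J \<noteq> {}" for J
      using that
    proof (induction J rule: finite_ne_induct)
      case (singleton x)
      have "tuple k p x" using singleton H by auto
      then show ?case using ad unfolding addressable_def by blast
    next
      case (insert x J)
      obtain VJ where VJ: "VJ \<in> F" "logical_op n k E VJ" "logical_action E VJ = apply_on k J U"
        using insert by auto
      have tx: "tuple k p x" using insert.prems H by auto
      obtain Vx where Vx: "Vx \<in> F" "logical_op n k E Vx" "logical_action E Vx = apply_on k {x} U"
        using ad tx unfolding addressable_def by blast
      have inF: "Vx * VJ \<in> F" using assms(4) VJ(1) Vx(1) unfolding closed_comp_def by blast
      have LM: "logical_op n k E (Vx * VJ) \<and> logical_action E (Vx * VJ) = logical_action E Vx * logical_action E VJ"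
        using logical_mult[OF assms(2) VJ(2) Vx(2)] .
      have disj: "\<forall>s\<in>J. set s \<inter> set x = {}"
      proof
        fix s assume s: "s \<in> J"
        have "s \<noteq> x" using s insert.hyps(3) by auto
        moreover have "s \<in> I" "x \<in> I" using s insert.prems by auto
        ultimately show "set s \<inter> set x = {}" using H unfolding pairwise_disjoint_tuples_def by simp
      qed
      have kt: "set x \<subseteq> {..<k}" using tx by (simp add: tuple_def)
      have kI: "\<forall>s\<in>J. set s \<subseteq> {..<k}" using H insert.prems by (auto simp: tuple_def)
      have "apply_on k {x} U * apply_on k J U = apply_on k (insert x J) U"
        using apply_on_insert[OF insert.hyps(1) insert.hyps(3) disj kt kI] .
      then show ?case using inF LM VJ Vx by auto
    qed
    show "\<exists>V\<in>F. logical_op n k E V \<and> logical_action E V = apply_on k I U"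
      using gen[OF fin] H by simp
  qed
next
  assume pa: "parallel_addressable n k E F p U"
  show "addressable n k E F p U" unfolding addressable_def
  proof (intro allI impI)
    fix t assume "tuple k p t"
    moreover have "pairwise_disjoint_tuples {t}" by (simp add: pairwise_disjoint_tuples_def)
    ultimately show "\<exists>V\<in>F. logical_op n k E V \<and> logical_action E V = apply_on k {t} U"
      using pa unfolding parallel_addressable_def by blast
  qed
qed

end
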